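(* Let $\Phi$ be a MAX NAE-$\{3,5\}$-SAT instance on variables $x_1,\dots,x_n$ with positive weights normalized to total weight $1$, and suppose there are unit vectors $\mathbf v_1,\dots,\mathbf v_n$ such that, writing the literal vector of a literal $b x_i$ as $b\mathbf v_i$: for every $3$-clause $\mathrm{NAE}_3(z_1,z_2,z_3)$ the literal vectors $\mathbf u_1,\mathbf u_2,\mathbf u_3$ satisfy $\mathbf u_i\cdot\mathbf u_j=-\tfrac13$ for all $i\ne j$; and for every $5$-clause $\mathrm{NAE}_5(z_1,\dots,z_5)$ the literal vectors (in a suitable ordering) satisfy $\mathbf u_i\cdot\mathbf u_j=\tfrac13$ for $1\le i<j\le 4$ and $\mathbf u_i\cdot\mathbf u_5=0$ for $1\le i\le 4$. Then $\Phi$ has completeness $1$, i.e., the optimal value of the Basic SDP of $\Phi$ equals $1$.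
   Context: $\mathrm{NAE}_k(y_1,\dots,y_k)$ is $0$ if $y_1=\dots=y_k$ and $1$ otherwise. The Basic SDP for an instance with variables $x_1,\dots,x_n$ and weighted clauses $C$ (weights $w_C$) has unit vectors $\mathbf v_0,\mathbf v_1,\dots,\mathbf v_n\in\mathbb R^{n+1}$ and, for each clause $C$, a probability distribution $p_C$ over assignments $\alpha$ to the variables of $C$, subject to: for each clause $C$ and variables $x_i,x_j$ in $C$, $\mathbf v_i\cdot\mathbf v_j=\sum_\alpha \alpha(x_i)\alpha(x_j)p_C(\alpha)$, and $\mathbf v_i\cdot\mathbf v_0=\sum_\alpha\alpha(x_i)p_C(\alpha)$; the objective is $\sum_C w_C\sum_\alpha p_C(\alpha)C(\alpha)$, where $C(\alpha)\in\{0,1\}$ indicates whether $\alpha$ satisfies $C$. The completeness of an instance is its Basic SDP optimal value. *)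

theory Defs
  imports "HOL-Analysis.Analysis"
begin

text \<open>A literal is a pair (b, i) with sign b in {-1,1} standing for b x_i.
  A clause NAE_k(z_1,...,z_k) is the list of its k literals.
  An nae_inst is a list of weighted clauses (w_C, C).\<close>

type_synonym lit = "real \<times> nat"
type_synonym clause = "lit list"
type_synonym nae_inst = "(real \<times> clause) list"

definition vars :: "clause \<Rightarrow> nat set" where
  "vars C = snd ` set C"

text \<open>Assignments to the variables of C, values in {-1,1}; extended by 0 outside vars C
  so that the set of assignments is finite.\<close>
definition assigns :: "clause \<Rightarrow> (nat \<Rightarrow> real) set" where
  "assigns C = {\<alpha>. (\<forall>i\<in>vars C. \<alpha> i \<in> {-1, 1}) \<and> (\<forall>i. i \<notin> vars C \<longrightarrow> \<alpha> i = 0)}"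

definition lit_val :: "(nat \<Rightarrow> real) \<Rightarrow> lit \<Rightarrow> real" where
  "lit_val \<alpha> l = fst l * \<alpha> (snd l)"

definition NAE :: "real list \<Rightarrow> real" where
  "NAE ys = (if (\<forall>y\<in>set ys. y = hd ys) then 0 else 1)"

definition clause_val :: "clause \<Rightarrow> (nat \<Rightarrow> real) \<Rightarrow> real" where
  "clause_val C \<alpha> = NAE (map (lit_val \<alpha>) C)"

definition nae35_instance :: "nat \<Rightarrow> nae_inst \<Rightarrow> bool" where
  "nae35_instance n \<Phi> \<longleftrightarrow>
     (\<forall>(w, C)\<in>set \<Phi>. w > 0 \<and> (length C = 3 \<or> length C = 5) \<and>
        (\<forall>(b, i)\<in>set C. b \<in> {-1, 1} \<and> i \<in> {1..n})) \<and>
     (\<Sum>k<length \<Phi>. fst (\<Phi> ! k)) = 1"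

text \<open>Vectors in R^(n+1) are represented as functions nat => real, coordinates 0..n.\<close>
definition ip :: "nat \<Rightarrow> (nat \<Rightarrow> real) \<Rightarrow> (nat \<Rightarrow> real) \<Rightarrow> real" where
  "ip n x y = (\<Sum>k\<le>n. x k * y k)"

definition sdp_feasible :: "nat \<Rightarrow> nae_inst \<Rightarrow> (nat \<Rightarrow> nat \<Rightarrow> real) \<Rightarrow>
    (nat \<Rightarrow> (nat \<Rightarrow> real) \<Rightarrow> real) \<Rightarrow> bool" where
  "sdp_feasible n \<Phi> v p \<longleftrightarrow>
     (\<forall>i\<le>n. ip n (v i) (v i) = 1) \<and>
     (\<forall>k<length \<Phi>. let C = snd (\<Phi> ! k) in
        (\<forall>\<alpha>\<in>assigns C. p k \<alpha> \<ge> 0) \<and>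
        (\<Sum>\<alpha>\<in>assigns C. p k \<alpha>) = 1 \<and>
        (\<forall>i\<in>vars C. \<forall>j\<in>vars C.
            ip n (v i) (v j) = (\<Sum>\<alpha>\<in>assigns C. \<alpha> i * \<alpha> j * p k \<alpha>)) \<and>
        (\<forall>i\<in>vars C. ip n (v i) (v 0) = (\<Sum>\<alpha>\<in>assigns C. \<alpha> i * p k \<alpha>)))"

definition sdp_objective :: "nae_inst \<Rightarrow> (nat \<Rightarrow> (nat \<Rightarrow> real) \<Rightarrow> real) \<Rightarrow> real" where
  "sdp_objective \<Phi> p =
     (\<Sum>k<length \<Phi>. fst (\<Phi> ! k) *
        (\<Sum>\<alpha>\<in>assigns (snd (\<Phi> ! k)). p k \<alpha> * clause_val (snd (\<Phi> ! k)) \<alpha>))"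

definition completeness :: "nat \<Rightarrow> nae_inst \<Rightarrow> real" where
  "completeness n \<Phi> = Sup {sdp_objective \<Phi> p | v p. sdp_feasible n \<Phi> v p}"

definition lit_vec :: "(nat \<Rightarrow> 'a::real_inner) \<Rightarrow> lit \<Rightarrow> 'a" where
  "lit_vec u l = fst l *\<^sub>R u (snd l)"

end

theory Submission
  imports Defs
begin

lemma gram_aux:
  fixes w :: "nat \<Rightarrow> 'b::real_inner"
  shows "\<exists>e g. (\<forall>s<k. \<forall>t<k. s \<noteq> t \<longrightarrow> e s \<bullet> e t = 0) \<and>
           (\<forall>i<k. w i = (\<Sum>t<k. g i t *\<^sub>R e t))"
proof (induction k)
  case 0 then show ?case by auto
next
  case (Suc k)
  then obtain e g where orth: "\<forall>s<k. \<forall>t<k. s \<noteq> t \<longrightarrow> e s \<bullet> e t = 0"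
    and rep: "\<forall>i<k. w i = (\<Sum>t<k. g i t *\<^sub>R e t)" by blast
  define c where "c t = (w k \<bullet> e t) / (e t \<bullet> e t)" for t
  define r where "r = w k - (\<Sum>t<k. c t *\<^sub>R e t)"
  define e' where "e' = e(k := r)"
  define g' where "g' i t = (if i = k then (if t < k then c t else 1) else (if t < k then g i t else 0))" for i t
  have ro: "r \<bullet> e s = 0" if "s < k" for s
  proof -
    have "(\<Sum>t<k. c t *\<^sub>R e t) \<bullet> e s = (\<Sum>t<k. if t = s then c s * (e s \<bullet> e s) else 0)"
      unfolding inner_sum_left using orth that by (intro sum.cong) auto
    also have "\<dots> = c s * (e s \<bullet> e s)" using that by simp
    also have "\<dots> = w k \<bullet> e s"
      unfolding c_def by (cases "e s = 0") auto
    finally show ?thesis unfolding r_def by (simp add: inner_diff_left)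
  qed
  have "\<forall>s<Suc k. \<forall>t<Suc k. s \<noteq> t \<longrightarrow> e' s \<bullet> e' t = 0"
    using orth ro by (auto simp: e'_def less_Suc_eq inner_commute)
  moreover have "\<forall>i<Suc k. w i = (\<Sum>t<Suc k. g' i t *\<^sub>R e' t)"
  proof (intro allI impI)
    fix i assume "i < Suc k"
    show "w i = (\<Sum>t<Suc k. g' i t *\<^sub>R e' t)"
    proof (cases "i = k")
      case True
      have "(\<Sum>t<Suc k. g' i t *\<^sub>R e' t) = (\<Sum>t<k. c t *\<^sub>R e t) + r"
        using True by (simp add: g'_def e'_def)
      then show ?thesis using True by (simp add: r_def)
    next
      case False
      then have "i < k" using \<open>i < Suc k\<close> by simp
      have "(\<Sum>t<Suc k. g' i t *\<^sub>R e' t) = (\<Sum>t<k. g i t *\<^sub>R e t)"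
        using False by (simp add: g'_def e'_def)
      then show ?thesis using rep \<open>i < k\<close> by simp
    qed
  qed
  ultimately show ?case by blast
qed

lemma gram:
  fixes w :: "nat \<Rightarrow> 'b::real_inner"
  shows "\<exists>f. \<forall>i<k. \<forall>j<k. (\<Sum>c<k. f i c * f j c) = w i \<bullet> w j"
proof -
  obtain e g where orth: "\<forall>s<k. \<forall>t<k. s \<noteq> t \<longrightarrow> e s \<bullet> e t = 0"
    and rep: "\<forall>i<k. w i = (\<Sum>t<k. g i t *\<^sub>R e t)" using gram_aux by blast
  define f where "f i t = g i t * norm (e t)" for i t
  have "(\<Sum>c<k. f i c * f j c) = w i \<bullet> w j" if "i < k" "j < k" for i j
  proof -
    have "w i \<bullet> w j = (\<Sum>t<k. \<Sum>s<k. g i t * g j s * (e t \<bullet> e s))"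
      using rep that apply (simp add: inner_sum_left inner_sum_right sum_distrib_left mult.assoc)
      apply (subst sum.swap) apply (simp add: mult_ac inner_commute)
      done
    also have "\<dots> = (\<Sum>t<k. \<Sum>s<k. if s = t then g i t * g j t * (e t \<bullet> e t) else 0)"
      using orth by (intro sum.cong refl) auto
    also have "\<dots> = (\<Sum>t<k. g i t * g j t * (e t \<bullet> e t))" by simp
    also have "\<dots> = (\<Sum>c<k. f i c * f j c)"
      unfolding f_def by (intro sum.cong refl) (simp add: power2_norm_eq_inner[symmetric] power2_eq_square)
    finally show ?thesis by simp
  qed
  then show ?thesis by blast
qed

definition asg :: "clause \<Rightarrow> real list \<Rightarrow> nat \<Rightarrow> real" where
  "asg C t i = (\<Sum>m<length C. if snd (C!m) = i then fst (C!m) * t!m else 0)"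

definition pd :: "clause \<Rightarrow> (real \<times> real list) list \<Rightarrow> (nat \<Rightarrow> real) \<Rightarrow> real" where
  "pd C Q \<alpha> = sum_list (map (\<lambda>x. if \<alpha> = asg C (snd x) then fst x else 0) Q)"

lemma asg_at:
  assumes "distinct (map snd C)" "m < length C"
  shows "asg C t (snd (C!m)) = fst (C!m) * t!m"
proof -
  have "asg C t (snd (C!m)) = (\<Sum>m'<length C. if m' = m then fst (C!m) * t!m else 0)"
    unfolding asg_def
  proof (intro sum.cong refl)
    fix m' assume "m' \<in> {..<length C}"
    then have "snd (C!m') = snd (C!m) \<longleftrightarrow> m' = m"
      using assms nth_eq_iff_index_eq[of "map snd C" m' m] by auto
    then show "(if snd (C!m') = snd (C!m) then fst (C!m') * t!m' else 0) =
        (if m' = m then fst (C!m) * t!m else 0)" by auto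
  qed
  also have "\<dots> = fst (C!m) * t!m" using assms by simp
  finally show ?thesis .
qed

lemma vars_nth: "i \<in> vars C \<Longrightarrow> \<exists>m<length C. i = snd (C!m)"
  unfolding vars_def by (metis imageE in_set_conv_nth)

lemma asg_out:
  assumes "i \<notin> vars C" shows "asg C t i = 0"
  unfolding asg_def using assms by (intro sum.neutral) (auto simp: vars_def)

lemma asg_in:
  assumes "distinct (map snd C)" "\<forall>x\<in>set C. fst x \<in> {-1,1}" "length t = length C" "set t \<subseteq> {-1,1}"
  shows "asg C t \<in> assigns C"
  unfolding assigns_def
proof (intro CollectI conjI ballI allI impI)
  fix i assume "i \<in> vars C"
  then obtain m where m: "m < length C" "i = snd (C!m)" unfolding vars_def by (auto simp: in_set_conv_nth)
  have "fst (C!m) \<in> {-1,1}" using assms(2) m by auto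
  moreover have "t!m \<in> set t" using assms(3) m by simp
  then have "t!m \<in> {-1,1}" using assms(4) by blast
  ultimately show "asg C t i \<in> {-1,1}" using asg_at[OF assms(1) m(1)] m by auto
next
  fix i assume "i \<notin> vars C" then show "asg C t i = 0" by (rule asg_out)
qed

lemma finite_assigns: "finite (assigns C)"
proof -
  have "assigns C \<subseteq> {f. \<forall>x. (x \<in> vars C \<longrightarrow> f x \<in> {-1,1}) \<and> (x \<notin> vars C \<longrightarrow> f x = 0)}"
    unfolding assigns_def by auto
  moreover have "finite (vars C)" unfolding vars_def by simp
  ultimately show ?thesis by (rule finite_subset[OF _ finite_set_of_finite_funs]) auto
qed

lemma sum_pd:
  assumes "finite A" "\<forall>x\<in>set Q. asg C (snd x) \<in> A"
  shows "(\<Sum>\<alpha>\<in>A. h \<alpha> * pd C Q \<alpha>) = sum_list (map (\<lambda>x. fst x * h (asg C (snd x))) Q)"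
  using assms(2)
proof (induction Q)
  case Nil then show ?case by (simp add: pd_def)
next
  case (Cons x Q)
  have "(\<Sum>\<alpha>\<in>A. h \<alpha> * pd C (x#Q) \<alpha>) =
     (\<Sum>\<alpha>\<in>A. if \<alpha> = asg C (snd x) then h \<alpha> * fst x else 0) + (\<Sum>\<alpha>\<in>A. h \<alpha> * pd C Q \<alpha>)"
  proof -
    have "pd C (x#Q) \<alpha> = (if \<alpha> = asg C (snd x) then fst x else 0) + pd C Q \<alpha>" for \<alpha>
      by (simp add: pd_def)
    then show ?thesis apply (simp add: sum.distrib[symmetric] distrib_left)
      apply (intro sum.cong refl) apply simp done
  qed
  also have "(\<Sum>\<alpha>\<in>A. if \<alpha> = asg C (snd x) then h \<alpha> * fst x else 0) = fst x * h (asg C (snd x))"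
    using Cons.prems assms(1) by (simp add: sum.delta)
  finally show ?case using Cons by simp
qed

lemma lit_val_asg:
  assumes "distinct (map snd C)" "\<forall>x\<in>set C. fst x \<in> {-1,1}" "m < length C"
  shows "lit_val (asg C t) (C!m) = t!m"
proof -
  have "fst (C!m) \<in> {-1,1}" using assms by auto
  then have "fst (C!m) * fst (C!m) = 1" by auto
  then show ?thesis unfolding lit_val_def using asg_at[OF assms(1,3)]
    by (simp add: mult.assoc[symmetric])
qed

lemma NAE_1:
  assumes "m < length ys" "l < length ys" "ys!m \<noteq> ys!l"
  shows "NAE ys = 1"
  using assms nth_mem unfolding NAE_def by metis

definition QOK :: "clause \<Rightarrow> (real \<times> real list) list \<Rightarrow> (nat \<Rightarrow> 'a::real_inner) \<Rightarrow> bool" where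
  "QOK C Q u \<longleftrightarrow> (\<forall>x\<in>set Q. fst x \<ge> 0 \<and> length (snd x) = length C \<and> set (snd x) \<subseteq> {-1,1} \<and>
       (\<exists>m<length C. \<exists>l<length C. snd x ! m \<noteq> snd x ! l)) \<and>
     sum_list (map fst Q) = 1 \<and>
     (\<forall>m<length C. \<forall>l<length C. sum_list (map (\<lambda>x. fst x * (snd x!m * snd x!l)) Q)
         = lit_vec u (C!m) \<bullet> lit_vec u (C!l)) \<and>
     (\<forall>m<length C. sum_list (map (\<lambda>x. fst x * snd x!m) Q) = 0)"

lemma sum_list_cmult: "sum_list (map (\<lambda>x. (c::real) * f x) xs) = c * sum_list (map f xs)"
  by (induction xs) (simp_all add: distrib_left)

lemma clause_ok:
  fixes u :: "nat \<Rightarrow> 'a::real_inner"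
  assumes dist: "distinct (map snd C)" and sg: "\<forall>x\<in>set C. fst x \<in> {-1,1}"
    and Q: "QOK C Q u"
    and V: "\<forall>i\<in>vars C. \<forall>j\<in>vars C. V i j = u i \<bullet> u j"
    and V0: "\<forall>i\<in>vars C. V0 i = 0"
  shows "(\<forall>\<alpha>\<in>assigns C. pd C Q \<alpha> \<ge> 0) \<and> (\<Sum>\<alpha>\<in>assigns C. pd C Q \<alpha>) = 1 \<and>
    (\<forall>i\<in>vars C. \<forall>j\<in>vars C. V i j = (\<Sum>\<alpha>\<in>assigns C. \<alpha> i * \<alpha> j * pd C Q \<alpha>)) \<and>
    (\<forall>i\<in>vars C. V0 i = (\<Sum>\<alpha>\<in>assigns C. \<alpha> i * pd C Q \<alpha>)) \<and>
    (\<Sum>\<alpha>\<in>assigns C. pd C Q \<alpha> * clause_val C \<alpha>) = 1"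
proof -
  note QD = Q[unfolded QOK_def]
  have inA: "\<forall>x\<in>set Q. asg C (snd x) \<in> assigns C"
    using QD asg_in[OF dist sg] by blast
  note S = sum_pd[OF finite_assigns inA]
  have "pd C Q \<alpha> \<ge> 0" for \<alpha>
    unfolding pd_def using QD by (intro sum_list_nonneg) auto
  moreover have "(\<Sum>\<alpha>\<in>assigns C. pd C Q \<alpha>) = 1"
    using S[of "\<lambda>_. 1"] QD by simp
  moreover have "V i j = (\<Sum>\<alpha>\<in>assigns C. \<alpha> i * \<alpha> j * pd C Q \<alpha>)"
    if iv: "i \<in> vars C" and jv: "j \<in> vars C" for i j
  proof -
    obtain m where m: "m < length C" "i = snd (C!m)" using vars_nth[OF iv] by blast
    obtain l where l: "l < length C" "j = snd (C!l)" using vars_nth[OF jv] by blast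
    have bm: "fst (C!m) \<in> {-1,1}" "fst (C!l) \<in> {-1,1}" using sg m l by auto
    have "(\<Sum>\<alpha>\<in>assigns C. \<alpha> i * \<alpha> j * pd C Q \<alpha>) =
        sum_list (map (\<lambda>x. fst x * (asg C (snd x) i * asg C (snd x) j)) Q)"
      using S[of "\<lambda>\<alpha>. \<alpha> i * \<alpha> j"] by simp
    also have "\<dots> = sum_list (map (\<lambda>x. (fst (C!m) * fst (C!l)) * (fst x * (snd x!m * snd x!l))) Q)"
      using asg_at[OF dist m(1)] asg_at[OF dist l(1)] m l by (simp add: mult_ac)
    also have "\<dots> = (fst (C!m) * fst (C!l)) * (lit_vec u (C!m) \<bullet> lit_vec u (C!l))"
      using QD m l by (simp add: sum_list_cmult)
    also have "\<dots> = (fst (C!m) * fst (C!l)) * (fst (C!m) * fst (C!l)) * (u i \<bullet> u j)"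
      using m l by (simp add: lit_vec_def mult_ac)
    also have "\<dots> = u i \<bullet> u j" using bm by auto
    finally show ?thesis using V that by simp
  qed
  moreover have "V0 i = (\<Sum>\<alpha>\<in>assigns C. \<alpha> i * pd C Q \<alpha>)" if iv: "i \<in> vars C" for i
  proof -
    obtain m where m: "m < length C" "i = snd (C!m)" using vars_nth[OF iv] by blast
    have "(\<Sum>\<alpha>\<in>assigns C. \<alpha> i * pd C Q \<alpha>) =
        sum_list (map (\<lambda>x. fst x * asg C (snd x) i) Q)"
      using S[of "\<lambda>\<alpha>. \<alpha> i"] by simp
    also have "\<dots> = sum_list (map (\<lambda>x. fst (C!m) * (fst x * snd x!m)) Q)"
      using asg_at[OF dist m(1)] m by (simp add: mult_ac)
    also have "\<dots> = 0" using QD m by (simp add: sum_list_cmult)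
    finally show ?thesis using V0 that by simp
  qed
  moreover have "(\<Sum>\<alpha>\<in>assigns C. pd C Q \<alpha> * clause_val C \<alpha>) = 1"
  proof -
    have "(\<Sum>\<alpha>\<in>assigns C. pd C Q \<alpha> * clause_val C \<alpha>) = (\<Sum>\<alpha>\<in>assigns C. clause_val C \<alpha> * pd C Q \<alpha>)"
      by (simp add: mult.commute)
    also have "\<dots> = sum_list (map (\<lambda>x. fst x * clause_val C (asg C (snd x))) Q)" by (rule S)
    also have "\<dots> = sum_list (map fst Q)"
    proof (intro arg_cong[where f=sum_list] map_cong refl)
      fix x assume x: "x \<in> set Q"
      have len: "length (snd x) = length C" using QD x by auto
      have eq: "map (lit_val (asg C (snd x))) C = snd x"
        by (rule nth_equalityI) (auto simp: len lit_val_asg[OF dist sg])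
      obtain m l where "m < length C" "l < length C" "snd x ! m \<noteq> snd x ! l" using QD x by blast
      then have "clause_val C (asg C (snd x)) = 1"
        unfolding clause_val_def eq using len NAE_1 by auto
      then show "fst x * clause_val C (asg C (snd x)) = fst x" by simp
    qed
    also have "\<dots> = 1" using QD by simp
    finally show ?thesis .
  qed
  ultimately show ?thesis by blast
qed

definition Q3 :: "(real \<times> real list) list" where
  "Q3 = map (\<lambda>t. (1/6, t)) [[1,1,-1],[1,-1,1],[-1,1,1],[-1,-1,1],[-1,1,-1],[1,-1,-1]]"

definition Q5 :: "(real \<times> real list) list" where
  "Q5 = [(1/6,[1,1,1,1,-1]), (1/6,[-1,-1,-1,-1,1])] @
     map (\<lambda>t. (1/12, t)) [[-1,1,1,1,1],[1,-1,1,1,1],[1,1,-1,1,1],[1,1,1,-1,1],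
                         [1,-1,-1,-1,-1],[-1,1,-1,-1,-1],[-1,-1,1,-1,-1],[-1,-1,-1,1,-1]]"

lemma lt3: "(m::nat) < 3 \<Longrightarrow> m = 0 \<or> m = 1 \<or> m = 2" by auto
lemma lt5: "(m::nat) < 5 \<Longrightarrow> m = 0 \<or> m = 1 \<or> m = 2 \<or> m = 3 \<or> m = 4" by auto

lemma Q3_mom: "m < 3 \<Longrightarrow> l < 3 \<Longrightarrow>
  sum_list (map (\<lambda>x. fst x * (snd x!m * snd x!l)) Q3) = (if m = l then 1 else -1/3)"
  by (drule lt3, drule lt3, auto simp: Q3_def)

lemma Q3_mean: "m < 3 \<Longrightarrow> sum_list (map (\<lambda>x. fst x * snd x!m) Q3) = 0"
  by (drule lt3, auto simp: Q3_def)

lemma Q3_props: "\<forall>x\<in>set Q3. fst x \<ge> 0 \<and> length (snd x) = 3 \<and> set (snd x) \<subseteq> {-1,1} \<and>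
       (\<exists>m<3. \<exists>l<3. snd x ! m \<noteq> snd x ! l)"
proof -
  have "\<forall>x\<in>set Q3. fst x \<ge> 0 \<and> length (snd x) = 3 \<and> set (snd x) \<subseteq> {-1,1} \<and>
       (snd x ! 0 \<noteq> snd x ! 1 \<or> snd x ! 0 \<noteq> snd x ! 2)" unfolding Q3_def by auto
  moreover have "(0::nat) < 3" "(1::nat) < 3" "(2::nat) < 3" by auto
  ultimately show ?thesis by blast
qed

lemma Q3_sum: "sum_list (map fst Q3) = 1" by (simp add: Q3_def)

definition M5 :: "nat \<Rightarrow> nat \<Rightarrow> real" where
  "M5 m l = (if m = l then 1 else if m < 4 \<and> l < 4 then 1/3 else 0)"

lemma Q5_mom: "m < 5 \<Longrightarrow> l < 5 \<Longrightarrow>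
  sum_list (map (\<lambda>x. fst x * (snd x!m * snd x!l)) Q5) = M5 m l"
  by (drule lt5, drule lt5, auto simp: Q5_def M5_def)

lemma Q5_mean: "m < 5 \<Longrightarrow> sum_list (map (\<lambda>x. fst x * snd x!m) Q5) = 0"
  by (drule lt5, auto simp: Q5_def)

lemma Q5_props: "\<forall>x\<in>set Q5. fst x \<ge> 0 \<and> length (snd x) = 5 \<and> set (snd x) \<subseteq> {-1,1} \<and>
       (\<exists>m<5. \<exists>l<5. snd x ! m \<noteq> snd x ! l)"
proof -
  have "\<forall>x\<in>set Q5. fst x \<ge> 0 \<and> length (snd x) = 5 \<and> set (snd x) \<subseteq> {-1,1} \<and>
       (snd x ! 0 \<noteq> snd x ! 1 \<or> snd x ! 0 \<noteq> snd x ! 2 \<or> snd x ! 0 \<noteq> snd x ! 3 \<or> snd x ! 0 \<noteq> snd x ! 4)"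
    unfolding Q5_def by auto
  moreover have "(0::nat) < 5" "(1::nat) < 5" "(2::nat) < 5" "(3::nat) < 5" "(4::nat) < 5" by auto
  ultimately show ?thesis by blast
qed

lemma Q5_sum: "sum_list (map fst Q5) = 1" by (simp add: Q5_def)

lemma lit_inner: "lit_vec u l \<bullet> lit_vec u l' = fst l * fst l' * (u (snd l) \<bullet> u (snd l'))"
  by (simp add: lit_vec_def)

lemma lit_same:
  assumes "fst l \<in> {-1,1}" "fst l' \<in> {-1,1}" "norm (u (snd l)) = 1" "snd l = snd l'"
  shows "lit_vec u l \<bullet> lit_vec u l' \<in> {-1,1}"
proof -
  have "u (snd l) \<bullet> u (snd l) = 1" using assms(3) power2_norm_eq_inner[of "u (snd l)"] by simp
  then show ?thesis using assms unfolding lit_inner by auto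
qed

lemma lit_diag:
  assumes "fst l \<in> {-1,1}" "norm (u (snd l)) = 1"
  shows "lit_vec u l \<bullet> lit_vec u l = 1"
proof -
  have "u (snd l) \<bullet> u (snd l) = 1" using assms(2) power2_norm_eq_inner[of "u (snd l)"] by simp
  then show ?thesis using assms unfolding lit_inner by auto
qed

lemma clause3:
  fixes u :: "nat \<Rightarrow> 'a::real_inner"
  assumes len: "length C = 3" and H: "\<forall>x\<in>set C. fst x \<in> {-1,1} \<and> norm (u (snd x)) = 1"
    and T: "\<forall>i<3. \<forall>j<3. i \<noteq> j \<longrightarrow> lit_vec u (C ! i) \<bullet> lit_vec u (C ! j) = - 1 / 3"
  shows "distinct (map snd C) \<and> QOK C Q3 u"
proof
  have Hn: "fst (C!m) \<in> {-1,1} \<and> norm (u (snd (C!m))) = 1" if "m < 3" for m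
    using H that len nth_mem[of m C] by auto
  show "distinct (map snd C)"
    unfolding distinct_conv_nth
  proof (intro allI impI)
    fix i j assume ij: "i < length (map snd C)" "j < length (map snd C)" "i \<noteq> j"
    show "map snd C ! i \<noteq> map snd C ! j"
    proof
      assume "map snd C ! i = map snd C ! j"
      then have "snd (C!i) = snd (C!j)" using ij by simp
      then have "lit_vec u (C!i) \<bullet> lit_vec u (C!j) \<in> {-1,1}"
        using lit_same[of "C!i" "C!j" u] Hn[of i] Hn[of j] ij len by simp
      then show False using T ij len by auto
    qed
  qed
  have M: "lit_vec u (C!m) \<bullet> lit_vec u (C!l) = (if m = l then 1 else -1/3)" if "m < 3" "l < 3" for m l
    using T that lit_diag[of "C!m" u] Hn[of m] by auto
  show "QOK C Q3 u"
    unfolding QOK_def len using Q3_props Q3_sum Q3_mom Q3_mean M by simp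
qed

definition perm5 :: "(nat \<Rightarrow> nat) \<Rightarrow> real list \<Rightarrow> real list" where
  "perm5 \<sigma> t = map (\<lambda>p. t ! inv \<sigma> p) [0..<5]"

definition Q5p :: "(nat \<Rightarrow> nat) \<Rightarrow> (real \<times> real list) list" where
  "Q5p \<sigma> = map (\<lambda>x. (fst x, perm5 \<sigma> (snd x))) Q5"

lemma clause5:
  fixes u :: "nat \<Rightarrow> 'a::real_inner"
  assumes len: "length C = 5" and H: "\<forall>x\<in>set C. fst x \<in> {-1,1} \<and> norm (u (snd x)) = 1"
    and sig: "\<sigma> permutes {..<5}"
    and A: "\<forall>i<4. \<forall>j<4. i \<noteq> j \<longrightarrow> lit_vec u (C ! \<sigma> i) \<bullet> lit_vec u (C ! \<sigma> j) = 1 / 3"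
    and B: "\<forall>i<4. lit_vec u (C ! \<sigma> i) \<bullet> lit_vec u (C ! \<sigma> 4) = 0"
  shows "distinct (map snd C) \<and> QOK C (Q5p \<sigma>) u"
proof
  have Hn: "fst (C!m) \<in> {-1,1} \<and> norm (u (snd (C!m))) = 1" if "m < 5" for m
    using H that len nth_mem[of m C] by auto
  have sl: "\<sigma> m < 5" if "m < 5" for m using permutes_in_image[OF sig] that by auto
  have il: "inv \<sigma> m < 5" if "m < 5" for m using permutes_in_image[OF permutes_inv[OF sig]] that by auto
  have si: "\<sigma> (inv \<sigma> p) = p" for p using permutes_inverses(1)[OF sig] .
  have is': "inv \<sigma> (\<sigma> p) = p" for p using permutes_inverses(2)[OF sig] .
  have M0: "lit_vec u (C!\<sigma> m) \<bullet> lit_vec u (C!\<sigma> l) = M5 m l" if ml: "m < 5" "l < 5" for m l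
  proof -
    consider "m = l" | "m \<noteq> l" "m < 4" "l < 4" | "m = 4" "l < 4" | "l = 4" "m < 4"
      using ml by (cases "m = l"; cases "m < 4"; cases "l < 4") auto
    then show ?thesis
    proof cases
      case 1 then show ?thesis using lit_diag[of "C!\<sigma> m" u] Hn[of "\<sigma> m"] sl[of m] ml by (simp add: M5_def)
    next
      case 2 then show ?thesis using A by (simp add: M5_def)
    next
      case 3 then show ?thesis using B by (simp add: M5_def inner_commute)
    next
      case 4 then show ?thesis using B by (simp add: M5_def)
    qed
  qed
  have M: "lit_vec u (C!p) \<bullet> lit_vec u (C!p') = M5 (inv \<sigma> p) (inv \<sigma> p')" if "p < 5" "p' < 5" for p p'
    using M0[OF il[OF that(1)] il[OF that(2)]] si by simp
  show "distinct (map snd C)"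
    unfolding distinct_conv_nth
  proof (intro allI impI)
    fix i j assume ij: "i < length (map snd C)" "j < length (map snd C)" "i \<noteq> j"
    show "map snd C ! i \<noteq> map snd C ! j"
    proof
      assume "map snd C ! i = map snd C ! j"
      then have "snd (C!i) = snd (C!j)" using ij by simp
      then have "lit_vec u (C!i) \<bullet> lit_vec u (C!j) \<in> {-1,1}"
        using lit_same[of "C!i" "C!j" u] Hn[of i] Hn[of j] ij len by simp
      moreover have "inv \<sigma> i \<noteq> inv \<sigma> j" using ij si by metis
      ultimately show False using M[of i j] ij len by (auto simp: M5_def split: if_splits)
    qed
  qed
  have pn: "perm5 \<sigma> t ! p = t ! inv \<sigma> p" if "p < 5" for t p
    using that by (simp add: perm5_def)
  have props: "\<forall>x\<in>set (Q5p \<sigma>). fst x \<ge> 0 \<and> length (snd x) = 5 \<and> set (snd x) \<subseteq> {-1,1} \<and>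
       (\<exists>m<5. \<exists>l<5. snd x ! m \<noteq> snd x ! l)"
  proof
    fix x assume "x \<in> set (Q5p \<sigma>)"
    then obtain y where y: "y \<in> set Q5" "x = (fst y, perm5 \<sigma> (snd y))" unfolding Q5p_def by auto
    have yp: "fst y \<ge> 0" "length (snd y) = 5" "set (snd y) \<subseteq> {-1,1}"
        "\<exists>m<5. \<exists>l<5. snd y ! m \<noteq> snd y ! l" using Q5_props y(1) by auto
    have "set (perm5 \<sigma> (snd y)) \<subseteq> {-1,1}"
    proof
      fix z assume "z \<in> set (perm5 \<sigma> (snd y))"
      then obtain p where "p < 5" "z = snd y ! inv \<sigma> p" unfolding perm5_def by auto
      then have "z \<in> set (snd y)" using il yp(2) by simp
      then show "z \<in> {-1,1}" using yp(3) by blast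
    qed
    moreover obtain m l where "m < 5" "l < 5" "snd y ! m \<noteq> snd y ! l" using yp(4) by blast
    then have "\<sigma> m < 5 \<and> \<sigma> l < 5 \<and> perm5 \<sigma> (snd y) ! \<sigma> m \<noteq> perm5 \<sigma> (snd y) ! \<sigma> l"
      using pn sl is' by simp
    ultimately show "fst x \<ge> 0 \<and> length (snd x) = 5 \<and> set (snd x) \<subseteq> {-1,1} \<and>
       (\<exists>m<5. \<exists>l<5. snd x ! m \<noteq> snd x ! l)" using y yp by (auto simp: perm5_def)
  qed
  have sum: "sum_list (map fst (Q5p \<sigma>)) = 1" using Q5_sum by (simp add: Q5p_def o_def)
  have mom: "sum_list (map (\<lambda>x. fst x * (snd x!p * snd x!p')) (Q5p \<sigma>)) = lit_vec u (C!p) \<bullet> lit_vec u (C!p')"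
    if "p < 5" "p' < 5" for p p'
    using Q5_mom[OF il[OF that(1)] il[OF that(2)]] M[OF that] that by (simp add: Q5p_def o_def pn)
  have mean: "sum_list (map (\<lambda>x. fst x * snd x!p) (Q5p \<sigma>)) = 0" if "p < 5" for p
    using Q5_mean[OF il[OF that]] that by (simp add: Q5p_def o_def pn)
  show "QOK C (Q5p \<sigma>) u"
    unfolding QOK_def len using props sum mom mean by simp
qed

lemma obj_le1:
  assumes inst: "nae35_instance n \<Phi>" and F: "sdp_feasible n \<Phi> v p"
  shows "sdp_objective \<Phi> p \<le> 1"
proof -
  have "fst (\<Phi>!k) * (\<Sum>\<alpha>\<in>assigns (snd (\<Phi>!k)). p k \<alpha> * clause_val (snd (\<Phi>!k)) \<alpha>) \<le> fst (\<Phi>!k)"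
    if k: "k < length \<Phi>" for k
  proof -
    let ?C = "snd (\<Phi>!k)"
    have w: "fst (\<Phi>!k) > 0" using inst k nth_mem[OF k] unfolding nae35_instance_def
      by (metis (mono_tags, lifting) case_prod_beta)
    have pk: "\<forall>\<alpha>\<in>assigns ?C. p k \<alpha> \<ge> 0" "(\<Sum>\<alpha>\<in>assigns ?C. p k \<alpha>) = 1"
      using F k unfolding sdp_feasible_def Let_def by auto
    have "(\<Sum>\<alpha>\<in>assigns ?C. p k \<alpha> * clause_val ?C \<alpha>) \<le> (\<Sum>\<alpha>\<in>assigns ?C. p k \<alpha>)"
    proof (rule sum_mono)
      fix \<alpha> assume "\<alpha> \<in> assigns ?C"
      moreover have "clause_val ?C \<alpha> \<le> 1" unfolding clause_val_def NAE_def by simp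
      ultimately show "p k \<alpha> * clause_val ?C \<alpha> \<le> p k \<alpha>" using pk(1)
        by (metis mult_left_mono mult.right_neutral)
    qed
    then show ?thesis using pk(2) w by (simp add: mult_left_le)
  qed
  then have "sdp_objective \<Phi> p \<le> (\<Sum>k<length \<Phi>. fst (\<Phi>!k))"
    unfolding sdp_objective_def by (intro sum_mono) auto
  also have "\<dots> = 1" using inst unfolding nae35_instance_def by simp
  finally show ?thesis .
qed

theorem mainTheorem2:
  fixes n :: nat and \<Phi> :: nae_inst and u :: "nat \<Rightarrow> 'a::real_inner"
  assumes inst: "nae35_instance n \<Phi>"
    and unit: "\<forall>i\<in>{1..n}. norm (u i) = 1"
    and three: "\<forall>(w, C)\<in>set \<Phi>. length C = 3 \<longrightarrow>
        (\<forall>i<3. \<forall>j<3. i \<noteq> j \<longrightarrow> lit_vec u (C ! i) \<bullet> lit_vec u (C ! j) = - 1 / 3)"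
    and five: "\<forall>(w, C)\<in>set \<Phi>. length C = 5 \<longrightarrow>
        (\<exists>\<sigma>. \<sigma> permutes {..<5} \<and>
           (\<forall>i<4. \<forall>j<4. i \<noteq> j \<longrightarrow>
              lit_vec u (C ! \<sigma> i) \<bullet> lit_vec u (C ! \<sigma> j) = 1 / 3) \<and>
           (\<forall>i<4. lit_vec u (C ! \<sigma> i) \<bullet> lit_vec u (C ! \<sigma> 4) = 0))"
  shows "completeness n \<Phi> = 1"
proof -
  have cl: "\<exists>Q. distinct (map snd (snd (\<Phi>!k))) \<and> QOK (snd (\<Phi>!k)) Q u
     \<and> vars (snd (\<Phi>!k)) \<subseteq> {1..n}" if k: "k \<in> {..<length \<Phi>}" for k
  proof -
    obtain w C where wC: "\<Phi>!k = (w, C)" by fastforce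
    have mem: "(w, C) \<in> set \<Phi>" using k wC nth_mem[of k \<Phi>] by auto
    have I: "w > 0 \<and> (length C = 3 \<or> length C = 5) \<and> (\<forall>(b, i)\<in>set C. b \<in> {-1, 1} \<and> i \<in> {1..n})"
      using inst mem unfolding nae35_instance_def by fast
    have H: "\<forall>x\<in>set C. fst x \<in> {-1,1} \<and> norm (u (snd x)) = 1"
      using I unit by fastforce
    have vs: "vars C \<subseteq> {1..n}" using I unfolding vars_def by fastforce
    have t3: "length C = 3 \<longrightarrow> (\<forall>i<3. \<forall>j<3. i \<noteq> j \<longrightarrow> lit_vec u (C ! i) \<bullet> lit_vec u (C ! j) = - 1 / 3)"
      using bspec[OF three mem] by simp
    have t5: "length C = 5 \<longrightarrow>
        (\<exists>\<sigma>. \<sigma> permutes {..<5} \<and>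
           (\<forall>i<4. \<forall>j<4. i \<noteq> j \<longrightarrow>
              lit_vec u (C ! \<sigma> i) \<bullet> lit_vec u (C ! \<sigma> j) = 1 / 3) \<and>
           (\<forall>i<4. lit_vec u (C ! \<sigma> i) \<bullet> lit_vec u (C ! \<sigma> 4) = 0))"
      using bspec[OF five mem] by simp
    have "\<exists>Q. distinct (map snd C) \<and> QOK C Q u"
    proof (cases "length C = 3")
      case True then show ?thesis using clause3[OF True H] t3 by blast
    next
      case False
      then have L: "length C = 5" using I by blast
      then obtain \<sigma> where "\<sigma> permutes {..<5}" "\<forall>i<4. \<forall>j<4. i \<noteq> j \<longrightarrow>
              lit_vec u (C ! \<sigma> i) \<bullet> lit_vec u (C ! \<sigma> j) = 1 / 3"
           "\<forall>i<4. lit_vec u (C ! \<sigma> i) \<bullet> lit_vec u (C ! \<sigma> 4) = 0" using t5 by blast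
      then show ?thesis using clause5[OF L H] by blast
    qed
    then show ?thesis using wC vs by auto
  qed
  then have cl': "\<forall>k\<in>{..<length \<Phi>}. \<exists>Q. distinct (map snd (snd (\<Phi>!k))) \<and> QOK (snd (\<Phi>!k)) Q u
     \<and> vars (snd (\<Phi>!k)) \<subseteq> {1..n}" by blast
  obtain Qf where Qf: "\<forall>k\<in>{..<length \<Phi>}. distinct (map snd (snd (\<Phi>!k))) \<and> QOK (snd (\<Phi>!k)) (Qf k) u
     \<and> vars (snd (\<Phi>!k)) \<subseteq> {1..n}"
    using bchoice[OF cl'] by blast
  define W :: "nat \<Rightarrow> 'a \<times> real" where "W i = (if i = 0 then (0, 1) else (u i, 0))" for i
  obtain f where f: "\<forall>i<Suc n. \<forall>j<Suc n. (\<Sum>c<Suc n. f i c * f j c) = W i \<bullet> W j"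
    using gram by blast
  have ipf: "ip n (f i) (f j) = W i \<bullet> W j" if "i \<le> n" "j \<le> n" for i j
    using f that unfolding ip_def by (simp add: lessThan_Suc_atMost[symmetric])
  define p where "p k = pd (snd (\<Phi>!k)) (Qf k)" for k
  have clk: "(\<forall>\<alpha>\<in>assigns (snd (\<Phi>!k)). p k \<alpha> \<ge> 0) \<and> (\<Sum>\<alpha>\<in>assigns (snd (\<Phi>!k)). p k \<alpha>) = 1 \<and>
    (\<forall>i\<in>vars (snd (\<Phi>!k)). \<forall>j\<in>vars (snd (\<Phi>!k)). ip n (f i) (f j) = (\<Sum>\<alpha>\<in>assigns (snd (\<Phi>!k)). \<alpha> i * \<alpha> j * p k \<alpha>)) \<and>
    (\<forall>i\<in>vars (snd (\<Phi>!k)). ip n (f i) (f 0) = (\<Sum>\<alpha>\<in>assigns (snd (\<Phi>!k)). \<alpha> i * p k \<alpha>)) \<and>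
    (\<Sum>\<alpha>\<in>assigns (snd (\<Phi>!k)). p k \<alpha> * clause_val (snd (\<Phi>!k)) \<alpha>) = 1" if k: "k < length \<Phi>" for k
  proof -
    let ?C = "snd (\<Phi>!k)"
    have q: "distinct (map snd ?C)" "QOK ?C (Qf k) u" "vars ?C \<subseteq> {1..n}" using Qf k by auto
    obtain w where wC: "\<Phi>!k = (w, ?C)" by (metis prod.collapse)
    have mem: "(w, ?C) \<in> set \<Phi>" using k wC nth_mem[of k \<Phi>] by auto
    have sg: "\<forall>x\<in>set ?C. fst x \<in> {-1,1}"
      using inst mem unfolding nae35_instance_def by fastforce
    have V: "\<forall>i\<in>vars ?C. \<forall>j\<in>vars ?C. ip n (f i) (f j) = u i \<bullet> u j"
    proof (intro ballI)
      fix i j assume "i \<in> vars ?C" "j \<in> vars ?C"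
      then have "i \<in> {1..n}" "j \<in> {1..n}" using q(3) by auto
      then show "ip n (f i) (f j) = u i \<bullet> u j" by (simp add: ipf W_def)
    qed
    have V0: "\<forall>i\<in>vars ?C. ip n (f i) (f 0) = 0"
    proof (intro ballI)
      fix i assume "i \<in> vars ?C"
      then have "i \<in> {1..n}" using q(3) by auto
      then show "ip n (f i) (f 0) = 0" by (simp add: ipf W_def)
    qed
    show ?thesis using clause_ok[OF q(1) sg q(2) V V0] unfolding p_def by simp
  qed
  have unitf: "\<forall>i\<le>n. ip n (f i) (f i) = 1"
  proof (intro allI impI)
    fix i assume i: "i \<le> n"
    show "ip n (f i) (f i) = 1"
    proof (cases "i = 0")
      case True then show ?thesis using i by (simp add: ipf W_def)
    next
      case False
      then have "norm (u i) = 1" using unit i by auto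
      then have "u i \<bullet> u i = 1" using power2_norm_eq_inner[of "u i"] by simp
      then show ?thesis using i False by (simp add: ipf W_def)
    qed
  qed
  have feas: "sdp_feasible n \<Phi> f p"
    unfolding sdp_feasible_def Let_def using unitf clk by blast
  have obj: "sdp_objective \<Phi> p = 1"
  proof -
    have "sdp_objective \<Phi> p = (\<Sum>k<length \<Phi>. fst (\<Phi>!k))"
      unfolding sdp_objective_def using clk by (intro sum.cong) auto
    also have "\<dots> = 1" using inst unfolding nae35_instance_def by simp
    finally show ?thesis .
  qed
  let ?S = "{sdp_objective \<Phi> p | v p. sdp_feasible n \<Phi> v p}"
  have "1 \<in> ?S" using feas obj by force
  moreover have "\<forall>x\<in>?S. x \<le> 1" using obj_le1[OF inst] by blast
  ultimately have "Sup ?S = 1" by (intro cSup_eq_maximum) auto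
  then show ?thesis unfolding completeness_def .
qed

end
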